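(* Let $a,b,c,\alpha\in\mathbb{R}$ with $\alpha\neq 0$ and $b\neq 0$, and let $\Omega\subset\mathbb{R}$ be a compact interval containing $0$ in its interior. Consider the control system on $\mathbb{R}^2$ $$\dot s=\omega b,\qquad \dot t=\tfrac12\alpha s^2+\omega(c+as),\qquad \omega\in\Omega,$$ with drift $f_0(s,t)=(0,\tfrac12\alpha s^2)$. Then the control sets of this system are exactly the one-point sets given by the singularities of the drift, namely the singletons $\{(0,t)\}$, $t\in\mathbb{R}$.
   Context: Controls are piecewise constant functions $\omega:\mathbb{R}\to\Omega$; $\varphi(\tau,\mathbf v,\omega)$ is the solution at time $\tau$ from $\mathbf v$, and $\mathcal O^+(\mathbf v)$ is the set of points reachable from $\mathbf v$ in nonnegative time. A control set is a nonempty set $\mathcal C\subset\mathbb{R}^2$, maximal with respect to inclusion, such that (i) for every $x\in\mathcal C$ there is a control $\omega$ with $\varphi(\tau,x,\omega)\in\mathcal C$ for all $\tau\ge0$, and (ii) $\mathcal C\subset\overline{\mathcal O^+(x)}$ for all $x\in\mathcal C$. This is the singular linear control system on $(\mathbb{R}\mathbf e_1\times\{0\})\backslash\mathbb{H}\simeq\mathbb{R}^2$ with $\alpha\neq0$, $\lambda=\beta=\gamma=0$. *)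

theory Defs
  imports "HOL-Analysis.Analysis"
begin

definition sys_field :: "real \<Rightarrow> real \<Rightarrow> real \<Rightarrow> real \<Rightarrow> real \<Rightarrow> real \<times> real \<Rightarrow> real \<times> real" where
  "sys_field a b c \<alpha> u z = (u * b, \<alpha> / 2 * (fst z)^2 + u * (c + a * fst z))"

definition loc_const :: "(real \<Rightarrow> real) \<Rightarrow> real \<Rightarrow> bool" where
  "loc_const \<omega> \<tau> \<longleftrightarrow> (\<exists>e>0. \<forall>\<sigma>. dist \<sigma> \<tau> < e \<longrightarrow> \<omega> \<sigma> = \<omega> \<tau>)"

definition pc_control :: "real set \<Rightarrow> (real \<Rightarrow> real) \<Rightarrow> bool" where
  "pc_control \<Omega> \<omega> \<longleftrightarrow> (\<forall>\<tau>. \<omega> \<tau> \<in> \<Omega>) \<and>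
     (\<forall>p q. finite {\<tau> \<in> {p..q}. \<not> loc_const \<omega> \<tau>})"

text \<open>x is the solution from v under control omega: continuous, x 0 = v, and
  solves the ODE wherever the control is locally constant.  (Solutions exist
  globally and are unique, so this determines phi(tau, v, omega) = x tau.)\<close>
definition is_solution :: "real \<Rightarrow> real \<Rightarrow> real \<Rightarrow> real \<Rightarrow> (real \<Rightarrow> real)
    \<Rightarrow> real \<times> real \<Rightarrow> (real \<Rightarrow> real \<times> real) \<Rightarrow> bool" where
  "is_solution a b c \<alpha> \<omega> v x \<longleftrightarrow> continuous_on UNIV x \<and> x 0 = v \<and>
     (\<forall>\<tau>. loc_const \<omega> \<tau> \<longrightarrow> (x has_vector_derivative sys_field a b c \<alpha> (\<omega> \<tau>) (x \<tau>)) (at \<tau>))"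

definition orbit_pos :: "real \<Rightarrow> real \<Rightarrow> real \<Rightarrow> real \<Rightarrow> real set \<Rightarrow> real \<times> real \<Rightarrow> (real \<times> real) set" where
  "orbit_pos a b c \<alpha> \<Omega> v = {y. \<exists>\<omega> x \<tau>. pc_control \<Omega> \<omega> \<and> is_solution a b c \<alpha> \<omega> v x \<and> \<tau> \<ge> 0 \<and> x \<tau> = y}"

definition ctrl_props :: "real \<Rightarrow> real \<Rightarrow> real \<Rightarrow> real \<Rightarrow> real set \<Rightarrow> (real \<times> real) set \<Rightarrow> bool" where
  "ctrl_props a b c \<alpha> \<Omega> D \<longleftrightarrow>
     (\<forall>v\<in>D. \<exists>\<omega> x. pc_control \<Omega> \<omega> \<and> is_solution a b c \<alpha> \<omega> v x \<and> (\<forall>\<tau>\<ge>0. x \<tau> \<in> D)) \<and>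
     (\<forall>v\<in>D. D \<subseteq> closure (orbit_pos a b c \<alpha> \<Omega> v))"

definition control_set :: "real \<Rightarrow> real \<Rightarrow> real \<Rightarrow> real \<Rightarrow> real set \<Rightarrow> (real \<times> real) set \<Rightarrow> bool" where
  "control_set a b c \<alpha> \<Omega> C \<longleftrightarrow> C \<noteq> {} \<and> ctrl_props a b c \<alpha> \<Omega> C \<and>
     (\<forall>D. C \<subseteq> D \<and> ctrl_props a b c \<alpha> \<Omega> D \<longrightarrow> D = C)"

end

theory Submission
  imports Defs
begin

lemma vd_fst: "(x has_vector_derivative D) F \<Longrightarrow> ((\<lambda>t. fst (x t)) has_real_derivative fst D) F"
  unfolding has_vector_derivative_def has_field_derivative_def
  apply (drule has_derivative_fst) apply (erule has_derivative_eq_rhs) by (auto simp: fun_eq_iff)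

lemma vd_snd: "(x has_vector_derivative D) F \<Longrightarrow> ((\<lambda>t. snd (x t)) has_real_derivative snd D) F"
  unfolding has_vector_derivative_def has_field_derivative_def
  apply (drule has_derivative_snd) apply (erule has_derivative_eq_rhs) by (auto simp: fun_eq_iff)

definition W :: "real \<Rightarrow> real \<Rightarrow> real \<Rightarrow> real \<Rightarrow> real \<times> real \<Rightarrow> real" where
  "W a b c \<alpha> z = (snd z - (c * fst z + a * (fst z)^2 / 2) / b) / \<alpha>"

lemma W_cont: "continuous_on UNIV (W a b c \<alpha>)"
  unfolding W_def divide_inverse by (intro continuous_intros)

lemma W_deriv:
  assumes "\<alpha> \<noteq> 0" "b \<noteq> 0"
    and d: "(x has_vector_derivative sys_field a b c \<alpha> u (x \<tau>)) (at \<tau>)"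
  shows "((\<lambda>t. W a b c \<alpha> (x t)) has_vector_derivative (fst (x \<tau>))^2 / 2) (at \<tau>)"
proof -
  have f: "((\<lambda>t. fst (x t)) has_real_derivative u * b) (at \<tau>)"
    using vd_fst[OF d] by (simp add: sys_field_def)
  have s: "((\<lambda>t. snd (x t)) has_real_derivative \<alpha> / 2 * (fst (x \<tau>))^2 + u * (c + a * fst (x \<tau>))) (at \<tau>)"
    using vd_snd[OF d] by (simp add: sys_field_def)
  have "((\<lambda>t. (snd (x t) - (c * fst (x t) + a * (fst (x t))^2 / 2) / b) / \<alpha>) has_real_derivative
      ((\<alpha> / 2 * (fst (x \<tau>))^2 + u * (c + a * fst (x \<tau>))) - (c * (u*b) + a * (2 * fst (x \<tau>) * (u*b)) / 2) / b) / \<alpha>) (at \<tau>)"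
    using assms(1,2) by (auto intro!: derivative_eq_intros f s)
  moreover have "((\<alpha> / 2 * (fst (x \<tau>))^2 + u * (c + a * fst (x \<tau>))) - (c * (u*b) + a * (2 * fst (x \<tau>) * (u*b)) / 2) / b) / \<alpha>
      = (fst (x \<tau>))^2 / 2"
    using assms(1,2) by (simp add: field_simps power2_eq_square)
  ultimately have X: "((\<lambda>t. (snd (x t) - (c * fst (x t) + a * (fst (x t))^2 / 2) / b) / \<alpha>) has_real_derivative
      (fst (x \<tau>))^2 / 2) (at \<tau>)" by metis
  show ?thesis
    unfolding W_def using X has_real_derivative_iff_has_vector_derivative by blast
qed

lemma W_integral:
  assumes "\<alpha> \<noteq> 0" "b \<noteq> 0" "pc_control \<Omega> \<omega>" "is_solution a b c \<alpha> \<omega> v x" "p \<le> q"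
  shows "((\<lambda>t. (fst (x t))^2 / 2) has_integral (W a b c \<alpha> (x q) - W a b c \<alpha> (x p))) {p..q}"
proof (rule fundamental_theorem_of_calculus_strong[where S="{\<tau> \<in> {p..q}. \<not> loc_const \<omega> \<tau>}"])
  show "finite {\<tau> \<in> {p..q}. \<not> loc_const \<omega> \<tau>}" using assms(3) unfolding pc_control_def by blast
  show "p \<le> q" by fact
  show "((\<lambda>t. W a b c \<alpha> (x t)) has_vector_derivative (fst (x \<tau>))^2 / 2) (at \<tau>)"
    if "\<tau> \<in> {p..q} - {\<tau> \<in> {p..q}. \<not> loc_const \<omega> \<tau>}" for \<tau>
    using that assms(4) unfolding is_solution_def by (auto intro!: W_deriv[OF assms(1,2)])
  have "continuous_on UNIV x" using assms(4) unfolding is_solution_def by blast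
  then have "continuous_on UNIV (\<lambda>t. W a b c \<alpha> (x t))"
    using continuous_on_compose2[OF W_cont] by blast
  then show "continuous_on {p..q} (\<lambda>t. W a b c \<alpha> (x t))"
    using continuous_on_subset by blast
qed

lemma W_mono:
  assumes "\<alpha> \<noteq> 0" "b \<noteq> 0" "pc_control \<Omega> \<omega>" "is_solution a b c \<alpha> \<omega> v x" "p \<le> q"
  shows "W a b c \<alpha> (x p) \<le> W a b c \<alpha> (x q)"
  using has_integral_nonneg[OF W_integral[OF assms]] by simp

lemma orbit_W:
  assumes "\<alpha> \<noteq> 0" "b \<noteq> 0" "y \<in> closure (orbit_pos a b c \<alpha> \<Omega> v)"
  shows "W a b c \<alpha> v \<le> W a b c \<alpha> y"
proof -
  have sub: "orbit_pos a b c \<alpha> \<Omega> v \<subseteq> {z. W a b c \<alpha> v \<le> W a b c \<alpha> z}"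
  proof
    fix z assume "z \<in> orbit_pos a b c \<alpha> \<Omega> v"
    then obtain \<omega> x \<tau> where h: "pc_control \<Omega> \<omega>" "is_solution a b c \<alpha> \<omega> v x" "\<tau> \<ge> 0" "x \<tau> = z"
      unfolding orbit_pos_def by blast
    have "x 0 = v" using h(2) unfolding is_solution_def by blast
    then show "z \<in> {z. W a b c \<alpha> v \<le> W a b c \<alpha> z}"
      using W_mono[OF assms(1,2) h(1,2) h(3)] h(4) by simp
  qed
  have "closed {z. W a b c \<alpha> v \<le> W a b c \<alpha> z}"
    by (rule closed_Collect_le[OF continuous_on_const W_cont])
  then have "closure (orbit_pos a b c \<alpha> \<Omega> v) \<subseteq> {z. W a b c \<alpha> v \<le> W a b c \<alpha> z}"
    using sub closure_minimal by blast
  then show ?thesis using assms(3) by blast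
qed

lemma key:
  assumes "\<alpha> \<noteq> 0" "b \<noteq> 0" "ctrl_props a b c \<alpha> \<Omega> D" "v \<in> D"
  shows "D = {(0, snd v)}"
proof -
  have Weq: "W a b c \<alpha> w = W a b c \<alpha> z" if "w \<in> D" "z \<in> D" for w z
    using orbit_W[OF assms(1,2)] assms(3) that unfolding ctrl_props_def
    by (meson order_antisym subsetD)
  have fst0: "fst w = 0" if w: "w \<in> D" for w
  proof (rule ccontr)
    assume ne: "fst w \<noteq> 0"
    obtain \<omega> x where h: "pc_control \<Omega> \<omega>" "is_solution a b c \<alpha> \<omega> w x" "\<forall>\<tau>\<ge>0. x \<tau> \<in> D"
      using assms(3) w unfolding ctrl_props_def by blast
    have x0: "x 0 = w" and cx: "continuous_on UNIV x" using h(2) unfolding is_solution_def by auto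
    define \<delta> where "\<delta> = (fst w)^2 / 4"
    have dpos: "\<delta> > 0" using ne by (simp add: \<delta>_def)
    have "continuous_on UNIV (\<lambda>t. (fst (x t))^2 / 2)"
      using cx by (intro continuous_intros) auto
    then have "isCont (\<lambda>t. (fst (x t))^2 / 2) 0" by (simp add: continuous_on_eq_continuous_at)
    then obtain e where e: "e > 0" "\<And>t. dist t 0 < e \<Longrightarrow> dist ((fst (x t))^2 / 2) ((fst (x 0))^2 / 2) < \<delta>"
      using dpos unfolding continuous_at_eps_delta by blast
    define h0 where "h0 = e / 2"
    have h0: "h0 > 0" "0 \<le> h0" using e by (auto simp: h0_def)
    have lb: "\<delta> \<le> (fst (x t))^2 / 2" if "t \<in> {0..h0}" for t
    proof -
      have "dist t 0 < e" using that e by (auto simp: h0_def dist_real_def)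
      from e(2)[OF this] have "\<bar>(fst (x t))^2 / 2 - (fst w)^2 / 2\<bar> < \<delta>" by (simp add: dist_real_def x0)
      then show ?thesis unfolding \<delta>_def abs_less_iff by linarith
    qed
    have I: "((\<lambda>t. (fst (x t))^2 / 2) has_integral (W a b c \<alpha> (x h0) - W a b c \<alpha> (x 0))) {0..h0}"
      by (rule W_integral[OF assms(1,2) h(1,2) h0(2)])
    have CI: "((\<lambda>t. \<delta>) has_integral (h0 * \<delta>)) {0..h0}"
      using has_integral_const_real[of \<delta> 0 h0] h0 by simp
    have "h0 * \<delta> \<le> W a b c \<alpha> (x h0) - W a b c \<alpha> (x 0)"
      by (rule has_integral_le[OF CI I]) (use lb in auto)
    moreover have "W a b c \<alpha> (x h0) = W a b c \<alpha> (x 0)"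
      using Weq h(3) h0 by auto
    ultimately show False using h0 dpos mult_pos_pos[of h0 \<delta>] by linarith
  qed
  show ?thesis
  proof
    show "D \<subseteq> {(0, snd v)}"
    proof
      fix z assume z: "z \<in> D"
      have "W a b c \<alpha> z = W a b c \<alpha> v" using Weq z assms(4) by blast
      moreover have "fst z = 0" "fst v = 0" using fst0 z assms(4) by auto
      ultimately have "snd z = snd v" using assms(1) by (simp add: W_def)
      then show "z \<in> {(0, snd v)}" using \<open>fst z = 0\<close> by (cases z) auto
    qed
    show "{(0, snd v)} \<subseteq> D" using assms(4) fst0[OF assms(4)] by (cases v) auto
  qed
qed

lemma const_sol:
  assumes "u0 < 0" "0 < u1"
  shows "ctrl_props a b c \<alpha> {u0..u1} {(0, t)}"
proof -
  have pc: "pc_control {u0..u1} (\<lambda>_. 0)"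
  proof -
    have "loc_const (\<lambda>_. 0::real) \<tau>" for \<tau> unfolding loc_const_def using zero_less_one by blast
    then show ?thesis using assms unfolding pc_control_def by auto
  qed
  have sol: "is_solution a b c \<alpha> (\<lambda>_. 0) (0, t) (\<lambda>_. (0, t))"
  proof -
    have "((\<lambda>_. (0::real, t)) has_vector_derivative 0) (at \<tau>)" for \<tau> by (rule has_vector_derivative_const)
    moreover have "(0::real, 0::real) = 0" by (simp add: zero_prod_def)
    ultimately show ?thesis unfolding is_solution_def sys_field_def by (auto intro: continuous_on_const)
  qed
  have "(0, t) \<in> orbit_pos a b c \<alpha> {u0..u1} (0, t)"
    unfolding orbit_pos_def using pc sol by force
  then show ?thesis unfolding ctrl_props_def using pc sol closure_subset by fastforce
qed

theorem proposition7:
  fixes a b c \<alpha> u0 u1 :: real and C :: "(real \<times> real) set"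
  assumes "\<alpha> \<noteq> 0" and "b \<noteq> 0" and "u0 < 0" and "0 < u1"
  shows "control_set a b c \<alpha> {u0..u1} C \<longleftrightarrow> (\<exists>t. C = {(0, t)})"
proof
  assume "control_set a b c \<alpha> {u0..u1} C"
  then obtain v where "v \<in> C" "ctrl_props a b c \<alpha> {u0..u1} C" unfolding control_set_def by blast
  then show "\<exists>t. C = {(0, t)}" using key[OF assms(1,2)] by blast
next
  assume "\<exists>t. C = {(0, t)}"
  then obtain t where C: "C = {(0, t)}" by blast
  show "control_set a b c \<alpha> {u0..u1} C"
    unfolding control_set_def
  proof (intro conjI allI impI)
    show "C \<noteq> {}" using C by simp
    show "ctrl_props a b c \<alpha> {u0..u1} C" using C const_sol[OF assms(3,4)] by simp
    fix D assume "C \<subseteq> D \<and> ctrl_props a b c \<alpha> {u0..u1} D"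
    then have "(0, t) \<in> D" "ctrl_props a b c \<alpha> {u0..u1} D" using C by auto
    from key[OF assms(1,2) this(2,1)] show "D = C" using C by simp
  qed
qed

end
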